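(* Let $A\in\mathbb{R}^{n\times n}$ be nonsymmetric and $A_0\in\mathbb{R}^{n\times n}$ symmetric positive definite, and suppose there are constants $c_0,c_1>0$ with $$\mathbf v^TA\mathbf v\ge c_0\,\mathbf v^TA_0\mathbf v\ \ \forall\mathbf v,\qquad \mathbf w^TA\mathbf v\le c_1\sqrt{\mathbf v^TA_0\mathbf v}\sqrt{\mathbf w^TA_0\mathbf w}\ \ \forall \mathbf v,\mathbf w\in\mathbb{R}^n.$$ Let $I_1,\dots,I_{N_s}$ be extension matrices and $P$ a coarse interpolation matrix as described in the context, and define the additive Schwarz preconditioners $B$ and $B_0$ by $$B^{-1}=P A_c^{-1}P^T+\sum_{k=1}^{N_s} I_kA_k^{-1}I_k^T,\qquad B_0^{-1}=P (A^{(0)}_c)^{-1}P^T+\sum_{k=1}^{N_s} I_k(A^{(0)}_k)^{-1}I_k^T,$$ where $A_k=I_k^TAI_k$, $A^{(0)}_k=I_k^TA_0I_k$, $A_c=P^TAP$, $A^{(0)}_c=P^TA_0P$. Assume there exist $\gamma_0,\gamma_1>0$ such that $$\gamma_0\,\mathbf v^TB_0\mathbf v\le \mathbf v^TA_0\mathbf v\le\gamma_1\,\mathbf v^TB_0\mathbf v\quad\text{for all }\mathbf v\in\mathbb{R}^n.$$ Then, with $$\beta_0=\frac{c_0^3}{c_1^2\gamma_1},\qquad \beta_1=\frac{c_1^2}{c_0\gamma_0},$$ we have $$\mathbf v^TB\mathbf v\ge\beta_0\,\mathbf v^TA_0\mathbf v\quad\text{for all }\mathbf v,\qquad \mathbf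 w^TB\mathbf v\le\beta_1\sqrt{\mathbf v^TA_0\mathbf v}\sqrt{\mathbf w^TA_0\mathbf w}\quad\text{for all }\mathbf v,\mathbf w,$$ and the same two estimates hold with $B$ replaced by $B^T$.
   Context: For $k=1,\dots,N_s$, $I_k\in\mathbb{R}^{n\times n_k}$ is a matrix whose columns are distinct standard basis vectors of $\mathbb{R}^n$ (so $I_k\mathbf v_k$ extends a local vector $\mathbf v_k$ by zero outside an index set, and $A_k$, $A_k^{(0)}$ are principal submatrices of $A$, $A_0$). $P\in\mathbb{R}^{n\times n_c}$ is a coarse-to-fine interpolation matrix with full column rank, so that $A_c$ and $A^{(0)}_c$ (and all local matrices) are invertible. *)

theory Defs
  imports "Jordan_Normal_Form.Matrix"
begin

text \<open>Inverse of a square matrix (only meaningful when the matrix is invertible).\<close>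
definition minv :: "real mat \<Rightarrow> real mat" where
  "minv M = (SOME N. inverts_mat M N \<and> inverts_mat N M)"

fun msum :: "nat \<Rightarrow> (nat \<Rightarrow> real mat) \<Rightarrow> nat \<Rightarrow> real mat" where
  "msum n f 0 = 0\<^sub>m n n"
| "msum n f (Suc k) = msum n f k + f (Suc k)"

definition extension_mat :: "nat \<Rightarrow> nat \<Rightarrow> real mat \<Rightarrow> bool" where
  "extension_mat n m E \<longleftrightarrow> E \<in> carrier_mat n m \<and>
     (\<exists>\<sigma>. inj_on \<sigma> {0..<m} \<and> (\<forall>j<m. \<sigma> j < n \<and> col E j = unit_vec n (\<sigma> j)))"

definition schwarz_inv :: "nat \<Rightarrow> real mat \<Rightarrow> real mat \<Rightarrow> nat \<Rightarrow> (nat \<Rightarrow> real mat) \<Rightarrow> real mat" where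
  "schwarz_inv n M P Ns Is =
     P * minv (transpose_mat P * M * P) * transpose_mat P
     + msum n (\<lambda>k. Is k * minv (transpose_mat (Is k) * M * Is k) * transpose_mat (Is k)) Ns"

end

theory Submission
  imports Defs "Jordan_Normal_Form.Determinant"
begin


lemma real_quad_cs:
  fixes a b c :: real
  assumes q: "\<And>t. 0 \<le> a + 2*t*b + t^2*c" and a: "a \<ge> 0" and c: "c \<ge> 0"
  shows "b \<le> sqrt a * sqrt c"
proof -
  have "b^2 \<le> a * c"
  proof (cases "c = 0")
    case True
    show ?thesis
    proof (rule ccontr)
      assume "\<not> ?thesis"
      hence b: "b \<noteq> 0" using True by auto
      have "0 \<le> a + 2*(-(a+1)/(2*b))*b + (-(a+1)/(2*b))^2*c" by (rule q)
      also have "\<dots> = -1" using b True by (simp add: field_simps)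
      finally show False by simp
    qed
  next
    case False
    hence cp: "c > 0" using c by auto
    have "0 \<le> a + 2*(-b/c)*b + (-b/c)^2*c" by (rule q)
    also have "\<dots> = a - b^2/c" using cp by (simp add: field_simps power2_eq_square)
    finally have "b^2/c \<le> a" by simp
    thus ?thesis using cp by (simp add: field_simps)
  qed
  hence "sqrt (b^2) \<le> sqrt (a*c)" by (rule real_sqrt_le_mono)
  thus ?thesis by (simp add: real_sqrt_mult)
qed

lemma cs_mat:
  fixes G :: "real mat"
  assumes G: "G \<in> carrier_mat m m" and sym: "transpose_mat G = G"
    and psd: "\<And>y. y \<in> carrier_vec m \<Longrightarrow> y \<bullet> (G *\<^sub>v y) \<ge> 0"
    and x: "x \<in> carrier_vec m" and z: "z \<in> carrier_vec m"
  shows "x \<bullet> (G *\<^sub>v z) \<le> sqrt (x \<bullet> (G *\<^sub>v x)) * sqrt (z \<bullet> (G *\<^sub>v z))"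
proof -
  have zx: "z \<bullet> (G *\<^sub>v x) = x \<bullet> (G *\<^sub>v z)"
    using transpose_vec_mult_scalar[OF G z x] sym G x z
    by (metis comm_scalar_prod mult_mat_vec_carrier)
  have "\<And>t. 0 \<le> x \<bullet> (G *\<^sub>v x) + 2*t*(x \<bullet> (G *\<^sub>v z)) + t^2*(z \<bullet> (G *\<^sub>v z))"
  proof -
    fix t :: real
    have tz: "t \<cdot>\<^sub>v z \<in> carrier_vec m" using z by simp
    have "0 \<le> (x + t \<cdot>\<^sub>v z) \<bullet> (G *\<^sub>v (x + t \<cdot>\<^sub>v z))" using psd x tz by simp
    also have "G *\<^sub>v (x + t \<cdot>\<^sub>v z) = G *\<^sub>v x + t \<cdot>\<^sub>v (G *\<^sub>v z)"
      using G x tz z by (simp add: mult_add_distrib_mat_vec mult_mat_vec)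
    also have "(x + t \<cdot>\<^sub>v z) \<bullet> (G *\<^sub>v x + t \<cdot>\<^sub>v (G *\<^sub>v z))
       = x \<bullet> (G *\<^sub>v x) + t * (x \<bullet> (G *\<^sub>v z)) + t * (z \<bullet> (G *\<^sub>v x)) + t*t*(z \<bullet> (G *\<^sub>v z))"
      using G x z tz
      by (simp add: add_scalar_prod_distrib[of _ m] scalar_prod_add_distrib[of _ m] algebra_simps)
    finally show "0 \<le> x \<bullet> (G *\<^sub>v x) + 2*t*(x \<bullet> (G *\<^sub>v z)) + t^2*(z \<bullet> (G *\<^sub>v z))"
      using zx by (simp add: power2_eq_square algebra_simps)
  qed
  thus ?thesis by (rule real_quad_cs) (use psd x z in auto)
qed

lemma minv_inv:
  assumes M: "M \<in> carrier_mat m m" and N: "N \<in> carrier_mat m m"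
    and MN: "M * N = 1\<^sub>m m" and NM: "N * M = 1\<^sub>m m"
  shows "minv M \<in> carrier_mat m m \<and> M * minv M = 1\<^sub>m m \<and> minv M * M = 1\<^sub>m m"
proof -
  have dM: "dim_row M = m" using M by simp
  have dN: "dim_row N = m" using N by simp
  have ex: "\<exists>N. inverts_mat M N \<and> inverts_mat N M"
    unfolding inverts_mat_def dM by (rule exI[of _ N], unfold dN, rule conjI[OF MN NM])
  have X: "inverts_mat M (minv M) \<and> inverts_mat (minv M) M"
    unfolding minv_def by (rule someI_ex[OF ex])
  let ?X = "minv M"
  have 1: "M * ?X = 1\<^sub>m m" using X unfolding inverts_mat_def dM by simp
  have "dim_col (M * ?X) = m" unfolding 1 by simp
  hence c: "dim_col ?X = m" by simp
  have 2: "?X * M = 1\<^sub>m (dim_row ?X)" using X unfolding inverts_mat_def by simp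
  have "dim_col (?X * M) = dim_row ?X" unfolding 2 by simp
  hence r: "dim_row ?X = m" using M by simp
  have 3: "?X * M = 1\<^sub>m m" using 2 r by simp
  have "?X \<in> carrier_mat m m" by (rule carrier_matI[OF r c])
  with 1 3 show ?thesis by blast
qed

lemma pd_has_inverse:
  fixes M :: "real mat"
  assumes M: "M \<in> carrier_mat m m"
    and pd: "\<And>x. x \<in> carrier_vec m \<Longrightarrow> x \<noteq> 0\<^sub>v m \<Longrightarrow> x \<bullet> (M *\<^sub>v x) > 0"
  shows "minv M \<in> carrier_mat m m \<and> M * minv M = 1\<^sub>m m \<and> minv M * M = 1\<^sub>m m"
proof -
  have "det M \<noteq> 0"
  proof
    assume "det M = 0"
    then obtain v where v: "v \<in> carrier_vec m" "v \<noteq> 0\<^sub>v m" "M *\<^sub>v v = 0\<^sub>v m"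
      using det_0_iff_vec_prod_zero[OF M] by blast
    have "v \<bullet> (M *\<^sub>v v) > 0" using pd v by blast
    thus False using v by simp
  qed
  from det_non_zero_imp_unit[OF M this, of "()"]
  have "\<exists>N\<in>carrier_mat m m. N * M = 1\<^sub>m m \<and> M * N = 1\<^sub>m m"
    unfolding Units_def ring_mat_def by simp
  then obtain N where N: "N \<in> carrier_mat m m" "N * M = 1\<^sub>m m" "M * N = 1\<^sub>m m"
    by blast
  show ?thesis by (rule minv_inv[OF M N(1) N(3) N(2)])
qed

lemma real_sq_aux:
  fixes X K s :: real
  assumes X: "X \<ge> 0" and s: "s \<ge> 0" and le: "X \<le> K * s * sqrt X"
  shows "X \<le> K^2 * s^2"
proof (cases "X = 0")
  case True thus ?thesis by simp
next
  case False
  hence p: "sqrt X > 0" using X by simp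
  have "sqrt X * sqrt X \<le> (K * s) * sqrt X" using le X by simp
  hence "sqrt X \<le> K * s" using mult_right_le_imp_le p by blast
  hence "(sqrt X)^2 \<le> (K*s)^2" using p by (intro power_mono) auto
  thus ?thesis using X by (simp add: power_mult_distrib)
qed

lemma real_sqrt_aux:
  fixes a k r :: real
  assumes a: "a \<ge> 0" and k: "k \<ge> 0" and r: "r \<ge> 0" and le: "a \<le> k * sqrt a * r"
  shows "sqrt a \<le> k * r"
proof (cases "a = 0")
  case True thus ?thesis using k r by simp
next
  case False
  hence p: "sqrt a > 0" using a by simp
  have "sqrt a * sqrt a \<le> (k * r) * sqrt a" using le a by (simp add: ac_simps)
  thus ?thesis using mult_right_le_imp_le p by blast
qed

definition bndd :: "nat \<Rightarrow> real mat \<Rightarrow> real mat \<Rightarrow> real \<Rightarrow> bool" where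
  "bndd m F G K \<longleftrightarrow> (\<forall>a \<in> carrier_vec m. \<forall>b \<in> carrier_vec m.
      a \<bullet> (F *\<^sub>v b) \<le> K * sqrt (b \<bullet> (G *\<^sub>v b)) * sqrt (a \<bullet> (G *\<^sub>v a)))"

lemma dual_bound:
  fixes G H :: "real mat"
  assumes G: "G \<in> carrier_mat m m" and H: "H \<in> carrier_mat m m" and GH: "G * H = 1\<^sub>m m"
    and B: "bndd m G G K" and x: "x \<in> carrier_vec m" and y: "y \<in> carrier_vec m"
  shows "x \<bullet> y \<le> K * sqrt (x \<bullet> (G *\<^sub>v x)) * sqrt (y \<bullet> (H *\<^sub>v y))"
proof -
  define t where "t = H *\<^sub>v y"
  have t: "t \<in> carrier_vec m" using H y t_def by simp
  have "G *\<^sub>v t = (G * H) *\<^sub>v y" unfolding t_def using G H y by simp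
  hence Gt: "G *\<^sub>v t = y" using GH y by simp
  have "x \<bullet> y = x \<bullet> (G *\<^sub>v t)" using Gt by simp
  also have "\<dots> \<le> K * sqrt (t \<bullet> (G *\<^sub>v t)) * sqrt (x \<bullet> (G *\<^sub>v x))"
    using B x t unfolding bndd_def by auto
  also have "t \<bullet> (G *\<^sub>v t) = y \<bullet> (H *\<^sub>v y)" unfolding Gt unfolding t_def
    by (rule comm_scalar_prod[of _ m]) (use H y in auto)
  finally show ?thesis by (simp add: ac_simps)
qed

lemma sq_bound:
  fixes F G0 H0 :: "real mat"
  assumes F: "F \<in> carrier_mat m m" and G0: "G0 \<in> carrier_mat m m" and H0: "H0 \<in> carrier_mat m m"
    and GH: "G0 * H0 = 1\<^sub>m m" and B: "bndd m F G0 K" and y: "y \<in> carrier_vec m"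
    and X: "(F *\<^sub>v y) \<bullet> (H0 *\<^sub>v (F *\<^sub>v y)) \<ge> 0"
    and ps: "y \<bullet> (G0 *\<^sub>v y) \<ge> 0"
  shows "(F *\<^sub>v y) \<bullet> (H0 *\<^sub>v (F *\<^sub>v y)) \<le> K^2 * (y \<bullet> (G0 *\<^sub>v y))"
proof -
  define x where "x = F *\<^sub>v y"
  define z where "z = H0 *\<^sub>v x"
  have x: "x \<in> carrier_vec m" using F y x_def by simp
  have z: "z \<in> carrier_vec m" using H0 x z_def by simp
  have "G0 *\<^sub>v z = (G0 * H0) *\<^sub>v x" unfolding z_def using G0 H0 x by simp
  hence Gz: "G0 *\<^sub>v z = x" using GH x by simp
  have "x \<bullet> z = z \<bullet> x" using x z by (rule comm_scalar_prod)
  also have "\<dots> = z \<bullet> (F *\<^sub>v y)" using x_def by simp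
  also have "\<dots> \<le> K * sqrt (y \<bullet> (G0 *\<^sub>v y)) * sqrt (z \<bullet> (G0 *\<^sub>v z))"
    using B y z unfolding bndd_def by auto
  also have "z \<bullet> (G0 *\<^sub>v z) = x \<bullet> z" using Gz x z by (simp add: comm_scalar_prod[OF z x])
  finally have "x \<bullet> z \<le> K * sqrt (y \<bullet> (G0 *\<^sub>v y)) * sqrt (x \<bullet> z)" .
  from real_sq_aux[OF _ _ this] X ps
  have "x \<bullet> z \<le> K^2 * (sqrt (y \<bullet> (G0 *\<^sub>v y)))^2" unfolding x_def z_def by auto
  thus ?thesis using ps unfolding x_def z_def by simp
qed

lemma local_inv:
  fixes M M0 :: "real mat"
  assumes M: "M \<in> carrier_mat m m" and M0: "M0 \<in> carrier_mat m m"
    and sym: "transpose_mat M0 = M0"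
    and pd0: "\<And>x. x \<in> carrier_vec m \<Longrightarrow> x \<noteq> 0\<^sub>v m \<Longrightarrow> x \<bullet> (M0 *\<^sub>v x) > 0"
    and c0: "c0 > 0" and c1: "c1 > 0"
    and coer: "\<And>y. y \<in> carrier_vec m \<Longrightarrow> y \<bullet> (M *\<^sub>v y) \<ge> c0 * (y \<bullet> (M0 *\<^sub>v y))"
    and bnd: "bndd m M M0 c1"
  shows "minv M \<in> carrier_mat m m \<and> minv M0 \<in> carrier_mat m m
    \<and> (\<forall>x\<in>carrier_vec m. x \<bullet> (minv M *\<^sub>v x) \<ge> (c0/c1^2) * (x \<bullet> (minv M0 *\<^sub>v x)))
    \<and> (\<forall>x\<in>carrier_vec m. x \<bullet> (minv M0 *\<^sub>v x) \<ge> 0)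
    \<and> bndd m (minv M) (minv M0) (1/c0)"
proof -
  define N where "N = minv M"
  define N0 where "N0 = minv M0"
  have psd0: "y \<bullet> (M0 *\<^sub>v y) \<ge> 0" if y: "y \<in> carrier_vec m" for y
  proof (cases "y = 0\<^sub>v m")
    case True thus ?thesis using M0 by simp
  next
    case False thus ?thesis using pd0[OF y] by fastforce
  qed
  have pdM: "x \<bullet> (M *\<^sub>v x) > 0" if "x \<in> carrier_vec m" "x \<noteq> 0\<^sub>v m" for x
  proof -
    have "0 < c0 * (x \<bullet> (M0 *\<^sub>v x))" using pd0[OF that] c0 by simp
    also have "\<dots> \<le> x \<bullet> (M *\<^sub>v x)" using coer that(1) by blast
    finally show ?thesis .
  qed
  have IM: "N \<in> carrier_mat m m \<and> M * N = 1\<^sub>m m \<and> N * M = 1\<^sub>m m"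
    unfolding N_def by (rule pd_has_inverse[OF M pdM])
  have IM0: "N0 \<in> carrier_mat m m \<and> M0 * N0 = 1\<^sub>m m \<and> N0 * M0 = 1\<^sub>m m"
    unfolding N0_def by (rule pd_has_inverse[OF M0 pd0])
  have N: "N \<in> carrier_mat m m" and MN: "M * N = 1\<^sub>m m" using IM by auto
  have N0: "N0 \<in> carrier_mat m m" and MN0: "M0 * N0 = 1\<^sub>m m" using IM0 by auto
  have cs0: "bndd m M0 M0 1" unfolding bndd_def
  proof (intro ballI)
    fix a b :: "real vec" assume a: "a \<in> carrier_vec m" and b: "b \<in> carrier_vec m"
    show "a \<bullet> (M0 *\<^sub>v b) \<le> 1 * sqrt (b \<bullet> (M0 *\<^sub>v b)) * sqrt (a \<bullet> (M0 *\<^sub>v a))"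
      using cs_mat[OF M0 sym psd0 a b] by (simp add: ac_simps)
  qed
  have a0: "\<forall>x\<in>carrier_vec m. x \<bullet> (N0 *\<^sub>v x) \<ge> 0"
  proof
    fix x :: "real vec" assume x: "x \<in> carrier_vec m"
    define z where "z = N0 *\<^sub>v x"
    have z: "z \<in> carrier_vec m" using N0 x z_def by simp
    have "M0 *\<^sub>v z = (M0 * N0) *\<^sub>v x" unfolding z_def using M0 N0 x by simp
    hence Mz: "M0 *\<^sub>v z = x" using MN0 x by simp
    have "x \<bullet> (N0 *\<^sub>v x) = (M0 *\<^sub>v z) \<bullet> z" using Mz z_def by simp
    also have "\<dots> = z \<bullet> (M0 *\<^sub>v z)" by (rule comm_scalar_prod[of _ m]) (use M0 z in auto)
    finally show "x \<bullet> (N0 *\<^sub>v x) \<ge> 0" using psd0[OF z] by simp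
  qed
  have a: "\<forall>x\<in>carrier_vec m. x \<bullet> (N *\<^sub>v x) \<ge> (c0/c1^2) * (x \<bullet> (N0 *\<^sub>v x))"
  proof
    fix x :: "real vec" assume x: "x \<in> carrier_vec m"
    define y where "y = N *\<^sub>v x"
    have y: "y \<in> carrier_vec m" using N x y_def by simp
    have "M *\<^sub>v y = (M * N) *\<^sub>v x" unfolding y_def using M N x by simp
    hence My: "M *\<^sub>v y = x" using MN x by simp
    have "x \<bullet> (N *\<^sub>v x) = (M *\<^sub>v y) \<bullet> y" using My y_def by simp
    also have "\<dots> = y \<bullet> (M *\<^sub>v y)" by (rule comm_scalar_prod[of _ m]) (use M y in auto)
    finally have 1: "x \<bullet> (N *\<^sub>v x) \<ge> c0 * (y \<bullet> (M0 *\<^sub>v y))" using coer[OF y] by simp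
    have "(M *\<^sub>v y) \<bullet> (N0 *\<^sub>v (M *\<^sub>v y)) \<le> c1^2 * (y \<bullet> (M0 *\<^sub>v y))"
      by (rule sq_bound[OF M M0 N0 MN0 bnd y]) (use a0 My x psd0 y in auto)
    hence 2: "x \<bullet> (N0 *\<^sub>v x) \<le> c1^2 * (y \<bullet> (M0 *\<^sub>v y))" using My by simp
    have "(c0/c1^2) * (x \<bullet> (N0 *\<^sub>v x)) \<le> (c0/c1^2) * (c1^2 * (y \<bullet> (M0 *\<^sub>v y)))"
      using 2 c0 c1 by (intro mult_left_mono) auto
    also have "\<dots> = c0 * (y \<bullet> (M0 *\<^sub>v y))" using c1 by simp
    finally show "x \<bullet> (N *\<^sub>v x) \<ge> (c0/c1^2) * (x \<bullet> (N0 *\<^sub>v x))" using 1 by simp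
  qed
  have b: "bndd m N N0 (1/c0)" unfolding bndd_def
  proof (intro ballI)
    fix a b :: "real vec" assume a: "a \<in> carrier_vec m" and b: "b \<in> carrier_vec m"
    define s where "s = N *\<^sub>v b"
    have s: "s \<in> carrier_vec m" using N b s_def by simp
    have "M *\<^sub>v s = (M * N) *\<^sub>v b" unfolding s_def using M N b by simp
    hence Ms: "M *\<^sub>v s = b" using MN b by simp
    have d1: "s \<bullet> a \<le> 1 * sqrt (s \<bullet> (M0 *\<^sub>v s)) * sqrt (a \<bullet> (N0 *\<^sub>v a))"
      by (rule dual_bound[OF M0 N0 MN0 cs0 s a])
    have d2: "s \<bullet> b \<le> 1 * sqrt (s \<bullet> (M0 *\<^sub>v s)) * sqrt (b \<bullet> (N0 *\<^sub>v b))"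
      by (rule dual_bound[OF M0 N0 MN0 cs0 s b])
    have "c0 * (s \<bullet> (M0 *\<^sub>v s)) \<le> s \<bullet> b" using coer[OF s] Ms by simp
    hence "s \<bullet> (M0 *\<^sub>v s) \<le> (1/c0) * (s \<bullet> b)" using c0 by (simp add: field_simps)
    also have "\<dots> \<le> (1/c0) * (1 * sqrt (s \<bullet> (M0 *\<^sub>v s)) * sqrt (b \<bullet> (N0 *\<^sub>v b)))"
      using d2 c0 by (intro mult_left_mono) auto
    finally have "s \<bullet> (M0 *\<^sub>v s) \<le> (1/c0) * sqrt (s \<bullet> (M0 *\<^sub>v s)) * sqrt (b \<bullet> (N0 *\<^sub>v b))"
      by (simp add: ac_simps)
    from real_sqrt_aux[OF psd0[OF s] _ _ this] c0 a0 b
    have sq: "sqrt (s \<bullet> (M0 *\<^sub>v s)) \<le> (1/c0) * sqrt (b \<bullet> (N0 *\<^sub>v b))" by auto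
    have "a \<bullet> (N *\<^sub>v b) = s \<bullet> a" unfolding s_def by (rule comm_scalar_prod[of _ m]) (use N a b in auto)
    also have "\<dots> \<le> sqrt (s \<bullet> (M0 *\<^sub>v s)) * sqrt (a \<bullet> (N0 *\<^sub>v a))" using d1 by simp
    also have "\<dots> \<le> (1/c0) * sqrt (b \<bullet> (N0 *\<^sub>v b)) * sqrt (a \<bullet> (N0 *\<^sub>v a))"
      using sq a0 a by (intro mult_right_mono) auto
    finally show "a \<bullet> (N *\<^sub>v b) \<le> 1 / c0 * sqrt (b \<bullet> (N0 *\<^sub>v b)) * sqrt (a \<bullet> (N0 *\<^sub>v a))" .
  qed
  show ?thesis using N N0 a a0 b unfolding N_def N0_def by blast
qed

lemma ext_inj:
  assumes E: "extension_mat n m E" and x: "x \<in> carrier_vec m" and Ex: "E *\<^sub>v x = 0\<^sub>v n"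
  shows "x = 0\<^sub>v m"
proof -
  from E obtain \<sigma> where Ec: "E \<in> carrier_mat n m" and inj: "inj_on \<sigma> {0..<m}"
    and sig: "\<And>j. j < m \<Longrightarrow> \<sigma> j < n \<and> col E j = unit_vec n (\<sigma> j)"
    unfolding extension_mat_def by blast
  have "x $ j = 0" if j: "j < m" for j
  proof -
    have sj: "\<sigma> j < n" using sig j by blast
    have "(E *\<^sub>v x) $ (\<sigma> j) = row E (\<sigma> j) \<bullet> x" using Ec sj by simp
    also have "\<dots> = (\<Sum>i\<in>{0..<m}. E $$ (\<sigma> j, i) * x $ i)"
      unfolding scalar_prod_def using Ec x sj by simp
    also have "\<dots> = (\<Sum>i\<in>{0..<m}. (if i = j then x $ i else 0))"
    proof (rule sum.cong[OF refl])
      fix i assume i: "i \<in> {0..<m}"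
      have "E $$ (\<sigma> j, i) = col E i $ (\<sigma> j)" using Ec i sj by simp
      also have "\<dots> = unit_vec n (\<sigma> i) $ (\<sigma> j)" using sig i by simp
      also have "\<dots> = (if \<sigma> j = \<sigma> i then 1 else 0)" using sj by (simp add: unit_vec_def)
      also have "\<dots> = (if i = j then 1 else 0)" using inj i j unfolding inj_on_def by auto
      finally show "E $$ (\<sigma> j, i) * x $ i = (if i = j then x $ i else 0)" by simp
    qed
    also have "\<dots> = x $ j" using j by simp
    finally show ?thesis using Ex sj by simp
  qed
  thus ?thesis using x by (intro eq_vecI) auto
qed

lemma quad_E:
  fixes E N :: "real mat"
  assumes E: "E \<in> carrier_mat n m" and N: "N \<in> carrier_mat m m"
    and w: "w \<in> carrier_vec n" and u: "u \<in> carrier_vec n"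
  shows "w \<bullet> ((E * N * transpose_mat E) *\<^sub>v u) = (transpose_mat E *\<^sub>v w) \<bullet> (N *\<^sub>v (transpose_mat E *\<^sub>v u))"
proof -
  have "(E * N * transpose_mat E) *\<^sub>v u = (E * N) *\<^sub>v (transpose_mat E *\<^sub>v u)"
    by (rule assoc_mult_mat_vec[of _ n m _ n]) (use E N u in auto)
  also have "\<dots> = E *\<^sub>v (N *\<^sub>v (transpose_mat E *\<^sub>v u))"
    by (rule assoc_mult_mat_vec[of _ n m _ m]) (use E N u in auto)
  finally have "(E * N * transpose_mat E) *\<^sub>v u = E *\<^sub>v (N *\<^sub>v (transpose_mat E *\<^sub>v u))" .
  moreover have "(transpose_mat E *\<^sub>v w) \<bullet> (N *\<^sub>v (transpose_mat E *\<^sub>v u))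
     = w \<bullet> (E *\<^sub>v (N *\<^sub>v (transpose_mat E *\<^sub>v u)))"
    by (rule transpose_vec_mult_scalar[OF E _ w]) (use N u E in simp)
  ultimately show ?thesis by simp
qed

lemma quad_E2:
  fixes E M :: "real mat"
  assumes E: "E \<in> carrier_mat n m" and M: "M \<in> carrier_mat n n"
    and a: "a \<in> carrier_vec m" and b: "b \<in> carrier_vec m"
  shows "a \<bullet> ((transpose_mat E * M * E) *\<^sub>v b) = (E *\<^sub>v a) \<bullet> (M *\<^sub>v (E *\<^sub>v b))"
  using quad_E[of "transpose_mat E" m n M a b] E M a b by simp

lemma sym_E:
  fixes E M :: "real mat"
  assumes E: "E \<in> carrier_mat n m" and M: "M \<in> carrier_mat n n" and sym: "transpose_mat M = M"
  shows "transpose_mat (transpose_mat E * M * E) = transpose_mat E * M * E"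
proof -
  have 1: "transpose_mat (transpose_mat E * M * E) = transpose_mat E * transpose_mat (transpose_mat E * M)"
    by (rule transpose_mult) (use E M in auto)
  have 2: "transpose_mat (transpose_mat E * M) = transpose_mat M * E"
    using transpose_mult[of "transpose_mat E" m n M n] E M by simp
  show ?thesis unfolding 1 2 sym using E M by simp
qed

definition good :: "nat \<Rightarrow> real \<Rightarrow> real \<Rightarrow> real mat \<Rightarrow> real mat \<Rightarrow> bool" where
  "good n \<alpha> K F F0 \<longleftrightarrow> F \<in> carrier_mat n n \<and> F0 \<in> carrier_mat n n
     \<and> (\<forall>u\<in>carrier_vec n. u \<bullet> (F *\<^sub>v u) \<ge> \<alpha> * (u \<bullet> (F0 *\<^sub>v u)))
     \<and> (\<forall>u\<in>carrier_vec n. u \<bullet> (F0 *\<^sub>v u) \<ge> 0) \<and> bndd n F F0 K"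

lemma zero_mat_vec: "u \<in> carrier_vec n \<Longrightarrow> (0\<^sub>m n n :: real mat) *\<^sub>v u = 0\<^sub>v n"
  by (intro eq_vecI) (auto simp: scalar_prod_def)

lemma good_zero: "good n \<alpha> K (0\<^sub>m n n) (0\<^sub>m n n)"
  unfolding good_def bndd_def by (simp add: zero_mat_vec)

lemma real_cs2:
  fixes p1 p2 q1 q2 :: real
  assumes "p1 \<ge> 0" "p2 \<ge> 0" "q1 \<ge> 0" "q2 \<ge> 0"
  shows "sqrt p1 * sqrt q1 + sqrt p2 * sqrt q2 \<le> sqrt (p1 + p2) * sqrt (q1 + q2)"
proof -
  define x1 x2 y1 y2 where "x1 = sqrt p1" "x2 = sqrt p2" "y1 = sqrt q1" "y2 = sqrt q2"
  have p: "p1 = x1^2" "p2 = x2^2" "q1 = y1^2" "q2 = y2^2" using assms unfolding x1_x2_y1_y2_def by auto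
  have "(x1*y1 + x2*y2)^2 \<le> (x1^2 + x2^2) * (y1^2 + y2^2)"
  proof -
    have "(x1^2 + x2^2) * (y1^2 + y2^2) - (x1*y1 + x2*y2)^2 = (x1*y2 - x2*y1)^2"
      by (simp add: power2_eq_square algebra_simps)
    thus ?thesis by (metis diff_ge_0_iff_ge zero_le_power2)
  qed
  hence "sqrt ((x1*y1 + x2*y2)^2) \<le> sqrt ((x1^2 + x2^2) * (y1^2 + y2^2))"
    by (rule real_sqrt_le_mono)
  hence "x1*y1 + x2*y2 \<le> sqrt ((x1^2 + x2^2) * (y1^2 + y2^2))" by simp
  thus ?thesis unfolding p by (simp add: x1_x2_y1_y2_def real_sqrt_mult assms)
qed

lemma good_add:
  assumes F: "good n \<alpha> K F F0" and G: "good n \<alpha> K G G0" and K: "K \<ge> 0"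
  shows "good n \<alpha> K (F + G) (F0 + G0)"
proof -
  have Fc: "F \<in> carrier_mat n n" "F0 \<in> carrier_mat n n" and Gc: "G \<in> carrier_mat n n" "G0 \<in> carrier_mat n n"
    using F G unfolding good_def by auto
  have dist: "u \<bullet> ((X + Y) *\<^sub>v v) = u \<bullet> (X *\<^sub>v v) + u \<bullet> (Y *\<^sub>v v)"
    if "X \<in> carrier_mat n n" "Y \<in> carrier_mat n n" "u \<in> carrier_vec n" "v \<in> carrier_vec n"
    for X Y :: "real mat" and u v
    using that by (simp add: add_mult_distrib_mat_vec[of _ n n] scalar_prod_add_distrib[of _ n])
  have 1: "\<forall>u\<in>carrier_vec n. u \<bullet> ((F + G) *\<^sub>v u) \<ge> \<alpha> * (u \<bullet> ((F0 + G0) *\<^sub>v u))"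
  proof
    fix u :: "real vec" assume u: "u \<in> carrier_vec n"
    have "\<alpha> * (u \<bullet> ((F0 + G0) *\<^sub>v u)) = \<alpha> * (u \<bullet> (F0 *\<^sub>v u)) + \<alpha> * (u \<bullet> (G0 *\<^sub>v u))"
      using dist[OF Fc(2) Gc(2) u u] by (simp add: algebra_simps)
    also have "\<dots> \<le> u \<bullet> (F *\<^sub>v u) + u \<bullet> (G *\<^sub>v u)"
      using F G u unfolding good_def by (intro add_mono) auto
    also have "\<dots> = u \<bullet> ((F + G) *\<^sub>v u)" using dist[OF Fc(1) Gc(1) u u] by simp
    finally show "u \<bullet> ((F + G) *\<^sub>v u) \<ge> \<alpha> * (u \<bullet> ((F0 + G0) *\<^sub>v u))" .
  qed
  have 2: "\<forall>u\<in>carrier_vec n. u \<bullet> ((F0 + G0) *\<^sub>v u) \<ge> 0"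
    using F G dist[OF Fc(2) Gc(2)] unfolding good_def by simp
  have 3: "bndd n (F + G) (F0 + G0) K" unfolding bndd_def
  proof (intro ballI)
    fix a b :: "real vec" assume a: "a \<in> carrier_vec n" and b: "b \<in> carrier_vec n"
    have "a \<bullet> ((F + G) *\<^sub>v b) = a \<bullet> (F *\<^sub>v b) + a \<bullet> (G *\<^sub>v b)" by (rule dist[OF Fc(1) Gc(1) a b])
    also have "\<dots> \<le> K * sqrt (b \<bullet> (F0 *\<^sub>v b)) * sqrt (a \<bullet> (F0 *\<^sub>v a))
                 + K * sqrt (b \<bullet> (G0 *\<^sub>v b)) * sqrt (a \<bullet> (G0 *\<^sub>v a))"
      using F G a b unfolding good_def bndd_def by (intro add_mono) auto
    also have "\<dots> = K * (sqrt (b \<bullet> (F0 *\<^sub>v b)) * sqrt (a \<bullet> (F0 *\<^sub>v a))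
                 + sqrt (b \<bullet> (G0 *\<^sub>v b)) * sqrt (a \<bullet> (G0 *\<^sub>v a)))" by (simp add: algebra_simps)
    also have "\<dots> \<le> K * (sqrt (b \<bullet> (F0 *\<^sub>v b) + b \<bullet> (G0 *\<^sub>v b)) * sqrt (a \<bullet> (F0 *\<^sub>v a) + a \<bullet> (G0 *\<^sub>v a)))"
      using F G a b K unfolding good_def by (intro mult_left_mono real_cs2) auto
    also have "\<dots> = K * sqrt (b \<bullet> ((F0 + G0) *\<^sub>v b)) * sqrt (a \<bullet> ((F0 + G0) *\<^sub>v a))"
      using dist[OF Fc(2) Gc(2) a a] dist[OF Fc(2) Gc(2) b b] by simp
    finally show "a \<bullet> ((F + G) *\<^sub>v b) \<le> K * sqrt (b \<bullet> ((F0 + G0) *\<^sub>v b)) * sqrt (a \<bullet> ((F0 + G0) *\<^sub>v a))" .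
  qed
  show ?thesis unfolding good_def using Fc Gc 1 2 3 by auto
qed

lemma good_msum:
  assumes "\<And>k. 1 \<le> k \<Longrightarrow> k \<le> N \<Longrightarrow> good n \<alpha> K (f k) (g k)" and K: "K \<ge> 0"
  shows "good n \<alpha> K (msum n f N) (msum n g N)"
  using assms(1)
proof (induction N)
  case 0 thus ?case by (simp add: good_zero)
next
  case (Suc N)
  have "good n \<alpha> K (msum n f N) (msum n g N)" using Suc by auto
  moreover have "good n \<alpha> K (f (Suc N)) (g (Suc N))" using Suc by auto
  ultimately show ?case using good_add K by simp
qed

lemma good_term:
  fixes A A0 E :: "real mat"
  assumes A: "A \<in> carrier_mat n n" and A0: "A0 \<in> carrier_mat n n"
    and sym: "transpose_mat A0 = A0"
    and pd0: "\<And>v. v \<in> carrier_vec n \<Longrightarrow> v \<noteq> 0\<^sub>v n \<Longrightarrow> v \<bullet> (A0 *\<^sub>v v) > 0"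
    and c0: "c0 > 0" and c1: "c1 > 0"
    and coer: "\<And>v. v \<in> carrier_vec n \<Longrightarrow> v \<bullet> (A *\<^sub>v v) \<ge> c0 * (v \<bullet> (A0 *\<^sub>v v))"
    and bnd: "bndd n A A0 c1"
    and E: "E \<in> carrier_mat n m"
    and inj: "\<And>x. x \<in> carrier_vec m \<Longrightarrow> E *\<^sub>v x = 0\<^sub>v n \<Longrightarrow> x = 0\<^sub>v m"
  shows "good n (c0/c1^2) (1/c0) (E * minv (transpose_mat E * A * E) * transpose_mat E)
                               (E * minv (transpose_mat E * A0 * E) * transpose_mat E)"
proof -
  define M where "M = transpose_mat E * A * E"
  define M0 where "M0 = transpose_mat E * A0 * E"
  have M: "M \<in> carrier_mat m m" and M0: "M0 \<in> carrier_mat m m" using A A0 E unfolding M_def M0_def by auto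
  have q: "\<And>a b. a \<in> carrier_vec m \<Longrightarrow> b \<in> carrier_vec m \<Longrightarrow> a \<bullet> (M *\<^sub>v b) = (E *\<^sub>v a) \<bullet> (A *\<^sub>v (E *\<^sub>v b))"
    unfolding M_def by (rule quad_E2[OF E A])
  have q0: "\<And>a b. a \<in> carrier_vec m \<Longrightarrow> b \<in> carrier_vec m \<Longrightarrow> a \<bullet> (M0 *\<^sub>v b) = (E *\<^sub>v a) \<bullet> (A0 *\<^sub>v (E *\<^sub>v b))"
    unfolding M0_def by (rule quad_E2[OF E A0])
  have symM: "transpose_mat M0 = M0" unfolding M0_def by (rule sym_E[OF E A0 sym])
  have pdM: "x \<bullet> (M0 *\<^sub>v x) > 0" if x: "x \<in> carrier_vec m" "x \<noteq> 0\<^sub>v m" for x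
  proof -
    have "E *\<^sub>v x \<noteq> 0\<^sub>v n" using inj x by blast
    thus ?thesis using q0[OF x(1) x(1)] pd0[of "E *\<^sub>v x"] E x by simp
  qed
  have coerM: "y \<bullet> (M *\<^sub>v y) \<ge> c0 * (y \<bullet> (M0 *\<^sub>v y))" if y: "y \<in> carrier_vec m" for y
    using q[OF y y] q0[OF y y] coer[of "E *\<^sub>v y"] E y by simp
  have bndM: "bndd m M M0 c1" unfolding bndd_def
  proof (intro ballI)
    fix a b :: "real vec" assume a: "a \<in> carrier_vec m" and b: "b \<in> carrier_vec m"
    show "a \<bullet> (M *\<^sub>v b) \<le> c1 * sqrt (b \<bullet> (M0 *\<^sub>v b)) * sqrt (a \<bullet> (M0 *\<^sub>v a))"
      unfolding q[OF a b] q0[OF a a] q0[OF b b]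
      using bnd E a b unfolding bndd_def by simp
  qed
  note L = local_inv[OF M M0 symM pdM c0 c1 coerM bndM]
  define N where "N = minv M"
  define N0 where "N0 = minv M0"
  have N: "N \<in> carrier_mat m m" and N0: "N0 \<in> carrier_mat m m" using L unfolding N_def N0_def by auto
  have La: "\<And>x. x \<in> carrier_vec m \<Longrightarrow> x \<bullet> (N *\<^sub>v x) \<ge> (c0/c1^2) * (x \<bullet> (N0 *\<^sub>v x))"
    and Lp: "\<And>x. x \<in> carrier_vec m \<Longrightarrow> x \<bullet> (N0 *\<^sub>v x) \<ge> 0"
    and Lb: "bndd m N N0 (1/c0)" using L unfolding N_def N0_def by auto
  have qE: "\<And>w u. w \<in> carrier_vec n \<Longrightarrow> u \<in> carrier_vec n \<Longrightarrow>
     w \<bullet> ((E * N * transpose_mat E) *\<^sub>v u) = (transpose_mat E *\<^sub>v w) \<bullet> (N *\<^sub>v (transpose_mat E *\<^sub>v u))"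
    by (rule quad_E[OF E N])
  have qE0: "\<And>w u. w \<in> carrier_vec n \<Longrightarrow> u \<in> carrier_vec n \<Longrightarrow>
     w \<bullet> ((E * N0 * transpose_mat E) *\<^sub>v u) = (transpose_mat E *\<^sub>v w) \<bullet> (N0 *\<^sub>v (transpose_mat E *\<^sub>v u))"
    by (rule quad_E[OF E N0])
  have "good n (c0/c1^2) (1/c0) (E * N * transpose_mat E) (E * N0 * transpose_mat E)"
    unfolding good_def
  proof (intro conjI ballI)
    show "E * N * transpose_mat E \<in> carrier_mat n n" using E N by auto
    show "E * N0 * transpose_mat E \<in> carrier_mat n n" using E N0 by auto
  next
    fix u :: "real vec" assume u: "u \<in> carrier_vec n"
    show "u \<bullet> ((E * N * transpose_mat E) *\<^sub>v u) \<ge> (c0/c1^2) * (u \<bullet> ((E * N0 * transpose_mat E) *\<^sub>v u))"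
      unfolding qE[OF u u] qE0[OF u u] by (rule La) (use E u in simp)
    show "u \<bullet> ((E * N0 * transpose_mat E) *\<^sub>v u) \<ge> 0"
      unfolding qE0[OF u u] by (rule Lp) (use E u in simp)
  next
    show "bndd n (E * N * transpose_mat E) (E * N0 * transpose_mat E) (1/c0)"
      unfolding bndd_def
    proof (intro ballI)
      fix a b :: "real vec" assume a: "a \<in> carrier_vec n" and b: "b \<in> carrier_vec n"
      show "a \<bullet> ((E * N * transpose_mat E) *\<^sub>v b) \<le> 1/c0 * sqrt (b \<bullet> ((E * N0 * transpose_mat E) *\<^sub>v b))
               * sqrt (a \<bullet> ((E * N0 * transpose_mat E) *\<^sub>v a))"
        unfolding qE[OF a b] qE0[OF a a] qE0[OF b b]
        using Lb E a b unfolding bndd_def by simp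
    qed
  qed
  thus ?thesis unfolding N_def N0_def M_def M0_def .
qed

lemma good_schwarz:
  fixes A A0 P :: "real mat"
  assumes A: "A \<in> carrier_mat n n" and A0: "A0 \<in> carrier_mat n n"
    and sym: "transpose_mat A0 = A0"
    and pd0: "\<And>v. v \<in> carrier_vec n \<Longrightarrow> v \<noteq> 0\<^sub>v n \<Longrightarrow> v \<bullet> (A0 *\<^sub>v v) > 0"
    and c0: "c0 > 0" and c1: "c1 > 0"
    and coer: "\<And>v. v \<in> carrier_vec n \<Longrightarrow> v \<bullet> (A *\<^sub>v v) \<ge> c0 * (v \<bullet> (A0 *\<^sub>v v))"
    and bnd: "bndd n A A0 c1"
    and ext: "\<And>k. 1 \<le> k \<Longrightarrow> k \<le> Ns \<Longrightarrow> extension_mat n (ns k) (Is k)"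
    and P: "P \<in> carrier_mat n nc"
    and P_rank: "\<And>x. x \<in> carrier_vec nc \<Longrightarrow> P *\<^sub>v x = 0\<^sub>v n \<Longrightarrow> x = 0\<^sub>v nc"
  shows "good n (c0/c1^2) (1/c0) (schwarz_inv n A P Ns Is) (schwarz_inv n A0 P Ns Is)"
  unfolding schwarz_inv_def
proof (rule good_add)
  show "1/c0 \<ge> 0" using c0 by simp
  show "good n (c0 / c1\<^sup>2) (1 / c0) (P * minv (transpose_mat P * A * P) * transpose_mat P)
     (P * minv (transpose_mat P * A0 * P) * transpose_mat P)"
    by (rule good_term[OF A A0 sym pd0 c0 c1 coer bnd P P_rank])
  show "good n (c0 / c1\<^sup>2) (1 / c0)
     (msum n (\<lambda>k. Is k * minv (transpose_mat (Is k) * A * Is k) * transpose_mat (Is k)) Ns)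
     (msum n (\<lambda>k. Is k * minv (transpose_mat (Is k) * A0 * Is k) * transpose_mat (Is k)) Ns)"
  proof (rule good_msum)
    show "1/c0 \<ge> 0" using c0 by simp
    fix k assume k: "1 \<le> k" "k \<le> Ns"
    have e: "extension_mat n (ns k) (Is k)" using ext k by blast
    have Ic: "Is k \<in> carrier_mat n (ns k)" using e unfolding extension_mat_def by blast
    show "good n (c0 / c1\<^sup>2) (1 / c0) (Is k * minv (transpose_mat (Is k) * A * Is k) * transpose_mat (Is k))
         (Is k * minv (transpose_mat (Is k) * A0 * Is k) * transpose_mat (Is k))"
      by (rule good_term[OF A A0 sym pd0 c0 c1 coer bnd Ic ext_inj[OF e]])
  qed
qed

lemma invertible_minv:
  assumes C: "C \<in> carrier_mat n n" and inv: "invertible_mat C"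
  shows "minv C \<in> carrier_mat n n \<and> C * minv C = 1\<^sub>m n \<and> minv C * C = 1\<^sub>m n"
proof -
  have dC: "dim_row C = n" using C by simp
  have ex: "\<exists>N. inverts_mat C N \<and> inverts_mat N C" using inv unfolding invertible_mat_def by blast
  have X: "inverts_mat C (minv C) \<and> inverts_mat (minv C) C"
    unfolding minv_def by (rule someI_ex[OF ex])
  let ?X = "minv C"
  have 1: "C * ?X = 1\<^sub>m n" using X unfolding inverts_mat_def dC by simp
  have "dim_col (C * ?X) = n" unfolding 1 by simp
  hence c: "dim_col ?X = n" by simp
  have 2: "?X * C = 1\<^sub>m (dim_row ?X)" using X unfolding inverts_mat_def by simp
  have "dim_col (?X * C) = dim_row ?X" unfolding 2 by simp
  hence r: "dim_row ?X = n" using C by simp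
  have 3: "?X * C = 1\<^sub>m n" using 2 r by simp
  have "?X \<in> carrier_mat n n" by (rule carrier_matI[OF r c])
  with 1 3 show ?thesis by blast
qed

theorem lemma3p2:
  fixes n nc Ns :: nat and ns :: "nat \<Rightarrow> nat"
    and A A0 P :: "real mat" and Is :: "nat \<Rightarrow> real mat"
    and c0 c1 \<gamma>0 \<gamma>1 :: real
  assumes A: "A \<in> carrier_mat n n"
    and A0: "A0 \<in> carrier_mat n n"
    and A0_sym: "transpose_mat A0 = A0"
    and A0_pd: "\<And>v. v \<in> carrier_vec n \<Longrightarrow> v \<noteq> 0\<^sub>v n \<Longrightarrow> v \<bullet> (A0 *\<^sub>v v) > 0"
    and c0: "c0 > 0" and c1: "c1 > 0"
    and coer: "\<And>v. v \<in> carrier_vec n \<Longrightarrow> v \<bullet> (A *\<^sub>v v) \<ge> c0 * (v \<bullet> (A0 *\<^sub>v v))"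
    and bnd: "\<And>v w. v \<in> carrier_vec n \<Longrightarrow> w \<in> carrier_vec n \<Longrightarrow>
                w \<bullet> (A *\<^sub>v v) \<le> c1 * sqrt (v \<bullet> (A0 *\<^sub>v v)) * sqrt (w \<bullet> (A0 *\<^sub>v w))"
    and ext: "\<And>k. 1 \<le> k \<Longrightarrow> k \<le> Ns \<Longrightarrow> extension_mat n (ns k) (Is k)"
    and P: "P \<in> carrier_mat n nc"
    and P_rank: "\<And>x. x \<in> carrier_vec nc \<Longrightarrow> P *\<^sub>v x = 0\<^sub>v n \<Longrightarrow> x = 0\<^sub>v nc"
    and B_def: "invertible_mat (schwarz_inv n A P Ns Is)"
    and B0_def: "invertible_mat (schwarz_inv n A0 P Ns Is)"
    and g0: "\<gamma>0 > 0" and g1: "\<gamma>1 > 0"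
    and spec: "\<And>v. v \<in> carrier_vec n \<Longrightarrow>
        \<gamma>0 * (v \<bullet> (minv (schwarz_inv n A0 P Ns Is) *\<^sub>v v)) \<le> v \<bullet> (A0 *\<^sub>v v) \<and>
        v \<bullet> (A0 *\<^sub>v v) \<le> \<gamma>1 * (v \<bullet> (minv (schwarz_inv n A0 P Ns Is) *\<^sub>v v))"
  shows "let B = minv (schwarz_inv n A P Ns Is);
             \<beta>0 = c0 ^ 3 / (c1\<^sup>2 * \<gamma>1); \<beta>1 = c1\<^sup>2 / (c0 * \<gamma>0) in
         (\<forall>BB \<in> {B, transpose_mat B}.
            (\<forall>v \<in> carrier_vec n. v \<bullet> (BB *\<^sub>v v) \<ge> \<beta>0 * (v \<bullet> (A0 *\<^sub>v v))) \<and>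
            (\<forall>v \<in> carrier_vec n. \<forall>w \<in> carrier_vec n.
               w \<bullet> (BB *\<^sub>v v) \<le> \<beta>1 * sqrt (v \<bullet> (A0 *\<^sub>v v)) * sqrt (w \<bullet> (A0 *\<^sub>v w))))"
proof -
  define C where "C = schwarz_inv n A P Ns Is"
  define C0 where "C0 = schwarz_inv n A0 P Ns Is"
  define B where B_eq: "B = minv C"
  define B0 where B0_eq: "B0 = minv C0"
  define \<alpha> where "\<alpha> = c0 / c1^2"
  have \<alpha>: "\<alpha> > 0" using c0 c1 unfolding \<alpha>_def by simp
  have psdA0: "v \<bullet> (A0 *\<^sub>v v) \<ge> 0" if v: "v \<in> carrier_vec n" for v
  proof (cases "v = 0\<^sub>v n")
    case True thus ?thesis using A0 by simp
  next
    case False thus ?thesis using A0_pd[OF v] by fastforce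
  qed
  have bndA: "bndd n A A0 c1" unfolding bndd_def using bnd by blast
  have bndA0: "bndd n A0 A0 1" unfolding bndd_def
  proof (intro ballI)
    fix a b :: "real vec" assume a: "a \<in> carrier_vec n" and b: "b \<in> carrier_vec n"
    show "a \<bullet> (A0 *\<^sub>v b) \<le> 1 * sqrt (b \<bullet> (A0 *\<^sub>v b)) * sqrt (a \<bullet> (A0 *\<^sub>v a))"
      using cs_mat[OF A0 A0_sym psdA0 a b] by (simp add: ac_simps)
  qed
  have G: "good n \<alpha> (1/c0) C C0" unfolding C_def C0_def \<alpha>_def
    by (rule good_schwarz[OF A A0 A0_sym A0_pd c0 c1 coer bndA ext P P_rank])
  have G0: "good n (1/1^2) (1/1) C0 C0" unfolding C0_def
    by (rule good_schwarz[OF A0 A0 A0_sym A0_pd _ _ _ bndA0 ext P P_rank]) auto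
  have Cc: "C \<in> carrier_mat n n" and C0c: "C0 \<in> carrier_mat n n"
    and Gq: "\<And>u. u \<in> carrier_vec n \<Longrightarrow> u \<bullet> (C *\<^sub>v u) \<ge> \<alpha> * (u \<bullet> (C0 *\<^sub>v u))"
    and Gp: "\<And>u. u \<in> carrier_vec n \<Longrightarrow> u \<bullet> (C0 *\<^sub>v u) \<ge> 0"
    and Gb: "bndd n C C0 (1/c0)" using G unfolding good_def by auto
  have G0b: "bndd n C0 C0 1" using G0 unfolding good_def by simp
  have IB: "B \<in> carrier_mat n n \<and> C * B = 1\<^sub>m n \<and> B * C = 1\<^sub>m n"
    unfolding B_eq by (rule invertible_minv[OF Cc B_def[folded C_def]])
  have IB0: "B0 \<in> carrier_mat n n \<and> C0 * B0 = 1\<^sub>m n \<and> B0 * C0 = 1\<^sub>m n"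
    unfolding B0_eq by (rule invertible_minv[OF C0c B0_def[folded C0_def]])
  have Bc: "B \<in> carrier_mat n n" and CB: "C * B = 1\<^sub>m n" using IB by auto
  have B0c: "B0 \<in> carrier_mat n n" and CB0: "C0 * B0 = 1\<^sub>m n" using IB0 by auto
  have sp0: "\<gamma>0 * (v \<bullet> (B0 *\<^sub>v v)) \<le> v \<bullet> (A0 *\<^sub>v v)" and sp1: "v \<bullet> (A0 *\<^sub>v v) \<le> \<gamma>1 * (v \<bullet> (B0 *\<^sub>v v))"
    if "v \<in> carrier_vec n" for v using spec[OF that] unfolding B0_eq C0_def by auto
  have B0p: "v \<bullet> (B0 *\<^sub>v v) \<ge> 0" if v: "v \<in> carrier_vec n" for v
  proof -
    have "0 \<le> \<gamma>1 * (v \<bullet> (B0 *\<^sub>v v))" using sp1[OF v] psdA0[OF v] by linarith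
    thus ?thesis using g1 by (simp add: zero_le_mult_iff)
  qed
  have Cinv: "C *\<^sub>v (B *\<^sub>v v) = v" if v: "v \<in> carrier_vec n" for v
  proof -
    have "C *\<^sub>v (B *\<^sub>v v) = (C * B) *\<^sub>v v" using Cc Bc v by simp
    thus ?thesis using CB v by simp
  qed
  have LB: "v \<bullet> (B *\<^sub>v v) \<ge> c0 ^ 3 / (c1\<^sup>2 * \<gamma>1) * (v \<bullet> (A0 *\<^sub>v v))" if v: "v \<in> carrier_vec n" for v
  proof -
    define u where "u = B *\<^sub>v v"
    have u: "u \<in> carrier_vec n" using Bc v u_def by simp
    have Cu: "C *\<^sub>v u = v" unfolding u_def by (rule Cinv[OF v])
    have "v \<bullet> (B *\<^sub>v v) = (C *\<^sub>v u) \<bullet> u" using Cu u_def by simp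
    also have "\<dots> = u \<bullet> (C *\<^sub>v u)" by (rule comm_scalar_prod[of _ n]) (use Cc u in auto)
    finally have 1: "v \<bullet> (B *\<^sub>v v) \<ge> \<alpha> * (u \<bullet> (C0 *\<^sub>v u))" using Gq[OF u] by simp
    have "(C *\<^sub>v u) \<bullet> (B0 *\<^sub>v (C *\<^sub>v u)) \<le> (1/c0)^2 * (u \<bullet> (C0 *\<^sub>v u))"
      by (rule sq_bound[OF Cc C0c B0c CB0 Gb u]) (use Cu B0p v Gp u in auto)
    hence 2: "v \<bullet> (B0 *\<^sub>v v) \<le> (1/c0)^2 * (u \<bullet> (C0 *\<^sub>v u))" using Cu by simp
    have "c0 ^ 3 / (c1\<^sup>2 * \<gamma>1) * (v \<bullet> (A0 *\<^sub>v v)) \<le> c0 ^ 3 / (c1\<^sup>2 * \<gamma>1) * (\<gamma>1 * ((1/c0)^2 * (u \<bullet> (C0 *\<^sub>v u))))"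
    proof -
      have "\<gamma>1 * (v \<bullet> (B0 *\<^sub>v v)) \<le> \<gamma>1 * ((1/c0)^2 * (u \<bullet> (C0 *\<^sub>v u)))"
        using 2 g1 by (intro mult_left_mono) auto
      hence "v \<bullet> (A0 *\<^sub>v v) \<le> \<gamma>1 * ((1/c0)^2 * (u \<bullet> (C0 *\<^sub>v u)))" using sp1[OF v] by linarith
      thus ?thesis using g1 c0 c1 by (intro mult_left_mono) auto
    qed
    also have "\<dots> = \<alpha> * (u \<bullet> (C0 *\<^sub>v u))" unfolding \<alpha>_def using c0 c1 g1
      by (simp add: field_simps power2_eq_square power3_eq_cube)
    finally show ?thesis using 1 by simp
  qed
  have UB: "w \<bullet> (B *\<^sub>v v) \<le> c1\<^sup>2 / (c0 * \<gamma>0) * sqrt (v \<bullet> (A0 *\<^sub>v v)) * sqrt (w \<bullet> (A0 *\<^sub>v w))"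
    if v: "v \<in> carrier_vec n" and w: "w \<in> carrier_vec n" for v w
  proof -
    define u where "u = B *\<^sub>v v"
    have u: "u \<in> carrier_vec n" using Bc v u_def by simp
    have Cu: "C *\<^sub>v u = v" unfolding u_def by (rule Cinv[OF v])
    have d1: "u \<bullet> w \<le> 1 * sqrt (u \<bullet> (C0 *\<^sub>v u)) * sqrt (w \<bullet> (B0 *\<^sub>v w))"
      by (rule dual_bound[OF C0c B0c CB0 G0b u w])
    have d2: "u \<bullet> v \<le> 1 * sqrt (u \<bullet> (C0 *\<^sub>v u)) * sqrt (v \<bullet> (B0 *\<^sub>v v))"
      by (rule dual_bound[OF C0c B0c CB0 G0b u v])
    have "\<alpha> * (u \<bullet> (C0 *\<^sub>v u)) \<le> u \<bullet> v" using Gq[OF u] Cu by simp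
    hence "u \<bullet> (C0 *\<^sub>v u) \<le> (1/\<alpha>) * (u \<bullet> v)" using \<alpha> by (simp add: field_simps)
    also have "\<dots> \<le> (1/\<alpha>) * (1 * sqrt (u \<bullet> (C0 *\<^sub>v u)) * sqrt (v \<bullet> (B0 *\<^sub>v v)))"
      using d2 \<alpha> by (intro mult_left_mono) auto
    finally have "u \<bullet> (C0 *\<^sub>v u) \<le> (1/\<alpha>) * sqrt (u \<bullet> (C0 *\<^sub>v u)) * sqrt (v \<bullet> (B0 *\<^sub>v v))"
      by (simp add: ac_simps)
    from real_sqrt_aux[OF Gp[OF u] _ _ this] \<alpha> B0p[OF v]
    have sq: "sqrt (u \<bullet> (C0 *\<^sub>v u)) \<le> (1/\<alpha>) * sqrt (v \<bullet> (B0 *\<^sub>v v))" by auto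
    have sv: "sqrt (v \<bullet> (B0 *\<^sub>v v)) \<le> sqrt (v \<bullet> (A0 *\<^sub>v v)) / sqrt \<gamma>0"
    proof -
      have "v \<bullet> (B0 *\<^sub>v v) \<le> (v \<bullet> (A0 *\<^sub>v v)) / \<gamma>0" using sp0[OF v] g0 by (simp add: field_simps)
      hence "sqrt (v \<bullet> (B0 *\<^sub>v v)) \<le> sqrt ((v \<bullet> (A0 *\<^sub>v v)) / \<gamma>0)" by (rule real_sqrt_le_mono)
      thus ?thesis by (simp add: real_sqrt_divide)
    qed
    have sw: "sqrt (w \<bullet> (B0 *\<^sub>v w)) \<le> sqrt (w \<bullet> (A0 *\<^sub>v w)) / sqrt \<gamma>0"
    proof -
      have "w \<bullet> (B0 *\<^sub>v w) \<le> (w \<bullet> (A0 *\<^sub>v w)) / \<gamma>0" using sp0[OF w] g0 by (simp add: field_simps)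
      hence "sqrt (w \<bullet> (B0 *\<^sub>v w)) \<le> sqrt ((w \<bullet> (A0 *\<^sub>v w)) / \<gamma>0)" by (rule real_sqrt_le_mono)
      thus ?thesis by (simp add: real_sqrt_divide)
    qed
    have "w \<bullet> (B *\<^sub>v v) = u \<bullet> w" unfolding u_def by (rule comm_scalar_prod[of _ n]) (use Bc v w in auto)
    also have "\<dots> \<le> sqrt (u \<bullet> (C0 *\<^sub>v u)) * sqrt (w \<bullet> (B0 *\<^sub>v w))" using d1 by simp
    also have "\<dots> \<le> ((1/\<alpha>) * sqrt (v \<bullet> (B0 *\<^sub>v v))) * sqrt (w \<bullet> (B0 *\<^sub>v w))"
      using sq B0p[OF w] by (intro mult_right_mono) auto
    also have "\<dots> \<le> ((1/\<alpha>) * (sqrt (v \<bullet> (A0 *\<^sub>v v)) / sqrt \<gamma>0)) * (sqrt (w \<bullet> (A0 *\<^sub>v w)) / sqrt \<gamma>0)"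
      using sv sw \<alpha> g0 B0p[OF v] B0p[OF w] psdA0[OF v] by (intro mult_mono mult_left_mono) auto
    also have "\<dots> = c1\<^sup>2 / (c0 * \<gamma>0) * sqrt (v \<bullet> (A0 *\<^sub>v v)) * sqrt (w \<bullet> (A0 *\<^sub>v w))"
      unfolding \<alpha>_def using c0 c1 g0 by (simp add: field_simps)
    finally show ?thesis .
  qed
  have LBT: "v \<bullet> (transpose_mat B *\<^sub>v v) \<ge> c0 ^ 3 / (c1\<^sup>2 * \<gamma>1) * (v \<bullet> (A0 *\<^sub>v v))"
    if v: "v \<in> carrier_vec n" for v
  proof -
    have "v \<bullet> (transpose_mat B *\<^sub>v v) = (transpose_mat B *\<^sub>v v) \<bullet> v"
      by (rule comm_scalar_prod[of _ n]) (use Bc v in auto)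
    also have "\<dots> = v \<bullet> (B *\<^sub>v v)" by (rule transpose_vec_mult_scalar[OF Bc v v])
    finally show ?thesis using LB[OF v] by simp
  qed
  have UBT: "w \<bullet> (transpose_mat B *\<^sub>v v) \<le> c1\<^sup>2 / (c0 * \<gamma>0) * sqrt (v \<bullet> (A0 *\<^sub>v v)) * sqrt (w \<bullet> (A0 *\<^sub>v w))"
    if v: "v \<in> carrier_vec n" and w: "w \<in> carrier_vec n" for v w
  proof -
    have "w \<bullet> (transpose_mat B *\<^sub>v v) = (transpose_mat B *\<^sub>v v) \<bullet> w"
      by (rule comm_scalar_prod[of _ n]) (use Bc v w in auto)
    also have "\<dots> = v \<bullet> (B *\<^sub>v w)" by (rule transpose_vec_mult_scalar[OF Bc w v])
    also have "\<dots> \<le> c1\<^sup>2 / (c0 * \<gamma>0) * sqrt (w \<bullet> (A0 *\<^sub>v w)) * sqrt (v \<bullet> (A0 *\<^sub>v v))"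
      by (rule UB[OF w v])
    finally show ?thesis by (simp add: ac_simps)
  qed
  show ?thesis unfolding Let_def B_eq[symmetric] C_def[symmetric]
    using LB UB LBT UBT by auto
qed

end
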